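(* Let $0<p<1$. Every Schur $\mathcal{C}_p$-bounded pattern is a subset of a set of the form $(F\times\mathbb{N})\cup(\mathbb{N}\times F)$ for some finite $F\subseteq\mathbb{N}$.
   Context: $\mathcal{C}_p$ is the Schatten ideal of compact operators $A$ on $\ell_2(\mathbb{N})$ with $\|A\|_{\mathcal{C}_p}=(\sum_{k\ge0}\mu(k,A)^p)^{1/p}<\infty$, where $\mu(k,A)=\inf\{\|A-R\|_\infty:\mathrm{rank}(R)\le k\}$. For $m\in\ell_\infty(\mathbb{N}^2)$, $T_m(\{A_{j,k}\})=\{m(j,k)A_{j,k}\}$; $m$ is a bounded Schur multiplier of $\mathcal{C}_p$ if $\|T_m(A)\|_{\mathcal{C}_p}\le C_m\|A\|_{\mathcal{C}_p}$ for all finitely supported matrices $A$; $S\subseteq\mathbb{N}^2$ is a Schur $\mathcal{C}_p$-bounded pattern if every $m\in\ell_\infty(\mathbb{N}^2)$ supported on $S$ is a bounded Schur multiplier of $\mathcal{C}_p$. *)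

theory Defs
  imports "HOL-Analysis.Analysis"
begin

type_synonym cmatrix = "nat \<Rightarrow> nat \<Rightarrow> complex"

definition fin_supp_mat :: "cmatrix \<Rightarrow> bool" where
  "fin_supp_mat A \<longleftrightarrow> finite {(j, k). A j k \<noteq> 0}"

definition fin_supp_vec :: "(nat \<Rightarrow> complex) \<Rightarrow> bool" where
  "fin_supp_vec x \<longleftrightarrow> finite {l. x l \<noteq> 0}"

definition vnorm2 :: "(nat \<Rightarrow> complex) \<Rightarrow> real" where
  "vnorm2 x = (\<Sum>l\<in>{l. x l \<noteq> 0}. (cmod (x l))\<^sup>2)"

definition mat_apply :: "cmatrix \<Rightarrow> (nat \<Rightarrow> complex) \<Rightarrow> nat \<Rightarrow> complex" where
  "mat_apply A x j = (\<Sum>l\<in>{l. x l \<noteq> 0}. A j l * x l)"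

text \<open>Operator norm on \<open>\<ell>\<^sub>2(\<nat>)\<close> of a finitely supported matrix (finitely supported
  vectors are dense, so the supremum over them is the operator norm).\<close>
definition opnorm :: "cmatrix \<Rightarrow> real" where
  "opnorm A = Sup {sqrt (vnorm2 (mat_apply A x)) | x. fin_supp_vec x \<and> vnorm2 x \<le> 1}"

definition rank_le :: "cmatrix \<Rightarrow> nat \<Rightarrow> bool" where
  "rank_le R k \<longleftrightarrow> (\<exists>u v :: nat \<Rightarrow> nat \<Rightarrow> complex.
      \<forall>j l. R j l = (\<Sum>i<k. u i j * v i l))"

text \<open>Singular numbers \<open>\<mu>(k,A) = inf{\<parallel>A - R\<parallel> : rank R \<le> k}\<close>; for finitely supported A
  it suffices to let R range over finitely supported matrices.\<close>
definition sing_num :: "nat \<Rightarrow> cmatrix \<Rightarrow> real" where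
  "sing_num k A = Inf {opnorm (\<lambda>j l. A j l - R j l) | R. fin_supp_mat R \<and> rank_le R k}"

definition schatten_norm :: "real \<Rightarrow> cmatrix \<Rightarrow> real" where
  "schatten_norm p A = (\<Sum>k. sing_num k A powr p) powr (1 / p)"

definition schur_mult :: "cmatrix \<Rightarrow> cmatrix \<Rightarrow> cmatrix" where
  "schur_mult m A = (\<lambda>j k. m j k * A j k)"

definition bounded_fun :: "cmatrix \<Rightarrow> bool" where
  "bounded_fun m \<longleftrightarrow> (\<exists>B. \<forall>j k. cmod (m j k) \<le> B)"

definition bounded_schur_multiplier :: "real \<Rightarrow> cmatrix \<Rightarrow> bool" where
  "bounded_schur_multiplier p m \<longleftrightarrow>
     (\<exists>C. \<forall>A. fin_supp_mat A \<longrightarrow> schatten_norm p (schur_mult m A) \<le> C * schatten_norm p A)"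

definition schur_bounded_pattern :: "real \<Rightarrow> (nat \<times> nat) set \<Rightarrow> bool" where
  "schur_bounded_pattern p S \<longleftrightarrow>
     (\<forall>m. bounded_fun m \<and> (\<forall>j k. (j, k) \<notin> S \<longrightarrow> m j k = 0) \<longrightarrow> bounded_schur_multiplier p m)"

end

theory Submission
  imports Defs
begin


lemma vnorm2_superset:
  assumes "finite T" "{l. x l \<noteq> 0} \<subseteq> T"
  shows "vnorm2 x = (\<Sum>l\<in>T. (cmod (x l))\<^sup>2)"
  unfolding vnorm2_def by (rule sum.mono_neutral_left) (use assms in auto)

lemma mat_apply_superset:
  assumes "finite T" "{l. x l \<noteq> 0} \<subseteq> T"
  shows "mat_apply A x j = (\<Sum>l\<in>T. A j l * x l)"
  unfolding mat_apply_def by (rule sum.mono_neutral_left) (use assms in auto)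

lemma vnorm2_nonneg: "0 \<le> vnorm2 x"
  unfolding vnorm2_def by (rule sum_nonneg) auto

lemma vnorm2_zero[simp]: "vnorm2 (\<lambda>_. 0) = 0"
  unfolding vnorm2_def by simp

lemma coord_le1:
  assumes "fin_supp_vec x" "vnorm2 x \<le> 1"
  shows "cmod (x l) \<le> 1"
proof (cases "x l = 0")
  case False
  have "(cmod (x l))\<^sup>2 \<le> vnorm2 x"
    unfolding vnorm2_def
    by (rule member_le_sum) (use assms False in \<open>auto simp: fin_supp_vec_def\<close>)
  then have "(cmod (x l))\<^sup>2 \<le> 1" using assms by linarith
  then show ?thesis by (simp add: power_le_one_iff)
qed simp

lemma opnorm_bdd:
  assumes "fin_supp_mat A"
  shows "bdd_above {sqrt (vnorm2 (mat_apply A x)) | x. fin_supp_vec x \<and> vnorm2 x \<le> 1}"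
proof -
  define S where "S = {(j, k). A j k \<noteq> 0}"
  have fS: "finite S" using assms unfolding S_def fin_supp_mat_def by simp
  define J where "J = fst ` S"
  define L where "L = snd ` S"
  have fJ: "finite J" and fL: "finite L" using fS unfolding J_def L_def by auto
  have zJ: "A j l = 0" if "j \<notin> J" for j l using that unfolding J_def S_def by force
  have zL: "A j l = 0" if "l \<notin> L" for j l using that unfolding L_def S_def by force
  define a where "a j = (\<Sum>l\<in>L. cmod (A j l))" for j
  have bound: "vnorm2 (mat_apply A x) \<le> (\<Sum>j\<in>J. (a j)\<^sup>2)"
    if x: "fin_supp_vec x" "vnorm2 x \<le> 1" for x
  proof -
    let ?T = "{l. x l \<noteq> 0} \<union> L"
    have fT: "finite ?T" using x fL unfolding fin_supp_vec_def by auto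
    have ma: "mat_apply A x j = (\<Sum>l\<in>?T. A j l * x l)" for j
      by (rule mat_apply_superset) (use fT in auto)
    have le: "cmod (mat_apply A x j) \<le> a j" for j
    proof -
      have "cmod (mat_apply A x j) \<le> (\<Sum>l\<in>?T. cmod (A j l * x l))"
        unfolding ma by (rule norm_sum)
      also have "\<dots> \<le> (\<Sum>l\<in>?T. cmod (A j l))"
        by (rule sum_mono) (use coord_le1[OF x] in \<open>auto simp: norm_mult intro: mult_left_le\<close>)
      also have "\<dots> = a j" unfolding a_def
        by (rule sum.mono_neutral_right) (use fT zL in auto)
      finally show ?thesis .
    qed
    have supp: "{j. mat_apply A x j \<noteq> 0} \<subseteq> J"
    proof
      fix j assume "j \<in> {j. mat_apply A x j \<noteq> 0}"
      then have "mat_apply A x j \<noteq> 0" by simp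
      moreover have "mat_apply A x j = 0" if "j \<notin> J" unfolding mat_apply_def using zJ[OF that] by simp
      ultimately show "j \<in> J" by blast
    qed
    have "vnorm2 (mat_apply A x) = (\<Sum>j\<in>J. (cmod (mat_apply A x j))\<^sup>2)"
      by (rule vnorm2_superset[OF fJ supp])
    also have "\<dots> \<le> (\<Sum>j\<in>J. (a j)\<^sup>2)"
      by (rule sum_mono) (use le in \<open>auto intro: power_mono\<close>)
    finally show ?thesis .
  qed
  show ?thesis
    by (rule bdd_aboveI[of _ "sqrt (\<Sum>j\<in>J. (a j)\<^sup>2)"]) (use bound in auto)
qed

lemma opnorm_in:
  assumes "fin_supp_mat A" "fin_supp_vec x" "vnorm2 x \<le> 1"
  shows "sqrt (vnorm2 (mat_apply A x)) \<le> opnorm A"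
  unfolding opnorm_def by (rule cSup_upper[OF _ opnorm_bdd[OF assms(1)]]) (use assms in auto)

lemma fin_supp_vec_zero: "fin_supp_vec (\<lambda>_. 0)" unfolding fin_supp_vec_def by simp

lemma mat_apply_zero_vec[simp]: "mat_apply A (\<lambda>_. 0) = (\<lambda>_. 0)"
  unfolding mat_apply_def by (rule ext) simp

lemma opnorm_nonneg:
  assumes "fin_supp_mat A" shows "0 \<le> opnorm A"
  using opnorm_in[OF assms fin_supp_vec_zero] by simp

lemma opnorm_le:
  assumes "\<And>x. fin_supp_vec x \<Longrightarrow> vnorm2 x \<le> 1 \<Longrightarrow> sqrt (vnorm2 (mat_apply A x)) \<le> c"
  shows "opnorm A \<le> c"
  unfolding opnorm_def by (rule cSup_least) (use assms fin_supp_vec_zero in \<open>auto\<close>)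

lemma fin_supp_diff:
  assumes "fin_supp_mat A" "fin_supp_mat R"
  shows "fin_supp_mat (\<lambda>j l. A j l - R j l)"
proof -
  have "{(j, l). A j l - R j l \<noteq> 0} \<subseteq> {(j, l). A j l \<noteq> 0} \<union> {(j, l). R j l \<noteq> 0}" by auto
  then show ?thesis using assms unfolding fin_supp_mat_def by (meson finite_UnI finite_subset)
qed

lemma fin_supp_zero: "fin_supp_mat (\<lambda>_ _. 0)" unfolding fin_supp_mat_def by simp

lemma rank_le_zero: "rank_le (\<lambda>_ _. 0) 0" unfolding rank_le_def by simp

lemma rank_le_mono:
  assumes "rank_le R k" "k \<le> k'" shows "rank_le R k'"
proof -
  obtain u v where uv: "\<forall>j l. R j l = (\<Sum>i<k. u i j * v i l)" using assms unfolding rank_le_def by blast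
  define u' where "u' i j = (if i < k then u i j else 0)" for i j
  have "(\<Sum>i<k'. u' i j * v i l) = (\<Sum>i<k. u i j * v i l)" for j l
  proof -
    have "(\<Sum>i<k'. u' i j * v i l) = (\<Sum>i<k. u' i j * v i l)"
      by (rule sum.mono_neutral_right) (use assms(2) in \<open>auto simp: u'_def\<close>)
    then show ?thesis by (simp add: u'_def)
  qed
  then show ?thesis unfolding rank_le_def using uv by metis
qed

lemma sing_num_nonneg:
  assumes "fin_supp_mat A" shows "0 \<le> sing_num k A"
  unfolding sing_num_def
  apply (rule cInf_greatest)
  using fin_supp_zero rank_le_mono[OF rank_le_zero, of k]
   apply blast
  using opnorm_nonneg fin_supp_diff assms by blast

lemma sing_num_le:
  assumes "fin_supp_mat A" "fin_supp_mat R" "rank_le R k"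
  shows "sing_num k A \<le> opnorm (\<lambda>j l. A j l - R j l)"
  unfolding sing_num_def
  apply (rule cInf_lower)
  using assms apply blast
  apply (rule bdd_belowI[of _ 0])
  using opnorm_nonneg fin_supp_diff assms by blast

lemma sing_num_ge:
  assumes "\<And>R. fin_supp_mat R \<Longrightarrow> rank_le R k \<Longrightarrow> c \<le> opnorm (\<lambda>j l. A j l - R j l)"
  shows "c \<le> sing_num k A"
  unfolding sing_num_def
  apply (rule cInf_greatest)
  using fin_supp_zero rank_le_mono[OF rank_le_zero, of k]
   apply blast
  using assms by blast

lemma opnorm_zero: "opnorm (\<lambda>_ _. 0) = 0"
proof -
  have "opnorm (\<lambda>_ _. 0) \<le> 0"
  proof (rule opnorm_le)
    fix x :: "nat \<Rightarrow> complex"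
    have "mat_apply (\<lambda>_ _. 0) x = (\<lambda>_. 0)" unfolding mat_apply_def by (rule ext) simp
    then show "sqrt (vnorm2 (mat_apply (\<lambda>_ _. 0) x)) \<le> 0" by simp
  qed
  then show ?thesis using opnorm_nonneg[OF fin_supp_zero] by linarith
qed

lemma sing_num_zero:
  assumes "fin_supp_mat A" "rank_le A k" shows "sing_num k A = 0"
  using sing_num_le[OF assms(1) assms(1) assms(2)] sing_num_nonneg[OF assms(1), of k]
  by (simp add: opnorm_zero)



lemma exists_kernel:
  fixes v :: "nat \<Rightarrow> nat \<Rightarrow> complex"
  assumes "finite L" "k < card L"
  shows "\<exists>y. (\<forall>l. l \<notin> L \<longrightarrow> y l = 0) \<and> (\<exists>l\<in>L. y l \<noteq> 0) \<and> (\<forall>i<k. (\<Sum>l\<in>L. v i l * y l) = 0)"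
  using assms
proof (induction k arbitrary: L v)
  case 0
  then obtain l0 where "l0 \<in> L" by (metis card.empty ex_in_conv less_irrefl)
  then show ?case by (intro exI[of _ "\<lambda>l. if l = l0 then 1 else 0"]) auto
next
  case (Suc k)
  show ?case
  proof (cases "\<forall>l\<in>L. v k l = 0")
    case True
    obtain y where y: "\<forall>l. l \<notin> L \<longrightarrow> y l = 0" "\<exists>l\<in>L. y l \<noteq> 0" "\<forall>i<k. (\<Sum>l\<in>L. v i l * y l) = 0"
      using Suc.IH[OF Suc.prems(1), of v] Suc.prems(2) by auto
    have "\<forall>i<Suc k. (\<Sum>l\<in>L. v i l * y l) = 0"
      using y(3) True by (auto simp: less_Suc_eq)
    then show ?thesis using y by blast
  next
    case False
    then obtain l0 where l0: "l0 \<in> L" "v k l0 \<noteq> 0" by blast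
    define L' where "L' = L - {l0}"
    define w where "w i l = v i l - v i l0 * v k l / v k l0" for i l
    have fL': "finite L'" using Suc.prems(1) unfolding L'_def by simp
    have cL': "k < card L'" using Suc.prems l0(1) unfolding L'_def by simp
    obtain y' where y': "\<forall>l. l \<notin> L' \<longrightarrow> y' l = 0" "\<exists>l\<in>L'. y' l \<noteq> 0"
        "\<forall>i<k. (\<Sum>l\<in>L'. w i l * y' l) = 0"
      using Suc.IH[OF fL' cL', of w] by blast
    define s where "s = (\<Sum>l\<in>L'. v k l * y' l)"
    define y where "y l = (if l = l0 then - s / v k l0 else y' l)" for l
    have split: "(\<Sum>l\<in>L. v i l * y l) = v i l0 * y l0 + (\<Sum>l\<in>L'. v i l * y' l)" for i
    proof -
      have "(\<Sum>l\<in>L. v i l * y l) = v i l0 * y l0 + (\<Sum>l\<in>L'. v i l * y l)"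
        unfolding L'_def using Suc.prems(1) l0(1) by (simp add: sum.remove)
      also have "(\<Sum>l\<in>L'. v i l * y l) = (\<Sum>l\<in>L'. v i l * y' l)"
        by (rule sum.cong) (auto simp: y_def L'_def)
      finally show ?thesis .
    qed
    have eqs: "(\<Sum>l\<in>L. v i l * y l) = 0" if "i < Suc k" for i
    proof (cases "i = k")
      case True
      then show ?thesis using split[of k] l0(2) by (simp add: y_def s_def)
    next
      case False
      then have ik: "i < k" using that by simp
      have "0 = (\<Sum>l\<in>L'. w i l * y' l)" using y'(3) ik by simp
      also have "\<dots> = (\<Sum>l\<in>L'. v i l * y' l) - v i l0 / v k l0 * s"
        unfolding w_def s_def by (simp add: algebra_simps sum_subtractf sum_distrib_left sum_divide_distrib)
      finally have "(\<Sum>l\<in>L'. v i l * y' l) = v i l0 / v k l0 * s" by simp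
      then show ?thesis using split[of i] by (simp add: y_def)
    qed
    have "\<forall>l. l \<notin> L \<longrightarrow> y l = 0" using y'(1) l0(1) unfolding y_def L'_def by auto
    moreover have "\<exists>l\<in>L. y l \<noteq> 0" using y'(2) unfolding y_def L'_def by auto
    ultimately show ?thesis using eqs by blast
  qed
qed



definition Am :: "(nat \<Rightarrow> nat) \<Rightarrow> (nat \<Rightarrow> nat) \<Rightarrow> nat \<Rightarrow> cmatrix" where
  "Am r c n = (\<lambda>j l. if j \<in> r ` {..<n} \<and> l \<in> c ` {..<n} then 1 else 0)"

definition Pm :: "(nat \<Rightarrow> nat) \<Rightarrow> (nat \<Rightarrow> nat) \<Rightarrow> nat \<Rightarrow> cmatrix" where
  "Pm r c n = (\<lambda>j l. if \<exists>i<n. j = r i \<and> l = c i then 1 else 0)"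

lemma fin_supp_Am: "fin_supp_mat (Am r c n)"
proof -
  have "{(j, l). Am r c n j l \<noteq> 0} \<subseteq> r ` {..<n} \<times> c ` {..<n}" by (auto simp: Am_def split: if_splits)
  then show ?thesis unfolding fin_supp_mat_def by (rule finite_subset) auto
qed

lemma fin_supp_Pm: "fin_supp_mat (Pm r c n)"
proof -
  have "{(j, l). Pm r c n j l \<noteq> 0} \<subseteq> r ` {..<n} \<times> c ` {..<n}" by (auto simp: Pm_def split: if_splits)
  then show ?thesis unfolding fin_supp_mat_def by (rule finite_subset) auto
qed

lemma rank_Am: "rank_le (Am r c n) 1"
  unfolding rank_le_def
  by (rule exI[of _ "\<lambda>i j. if j \<in> r ` {..<n} then 1 else 0"], rule exI[of _ "\<lambda>i l. if l \<in> c ` {..<n} then 1 else 0"])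
     (simp add: Am_def)

lemma rank_Pm:
  assumes "inj r" shows "rank_le (Pm r c n) n"
  unfolding rank_le_def
proof (rule exI[of _ "\<lambda>i j. if j = r i then 1 else 0"], rule exI[of _ "\<lambda>i l. if l = c i then 1 else 0"], intro allI)
  fix j l
  show "Pm r c n j l = (\<Sum>i<n. (if j = r i then 1 else 0) * (if l = c i then 1 else 0))"
  proof (cases "j \<in> r ` {..<n}")
    case True
    then obtain i0 where i0: "i0 < n" "j = r i0" by auto
    have "(\<Sum>i<n. (if j = r i then 1 else 0) * (if l = c i then 1 else (0::complex)))
        = (\<Sum>i<n. if i = i0 then (if l = c i0 then 1 else 0) else 0)"
      by (rule sum.cong) (use i0 assms in \<open>auto dest: injD\<close>)
    also have "\<dots> = (if l = c i0 then 1 else 0)" using i0 by simp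
    also have "\<dots> = Pm r c n j l" using i0 assms by (auto simp: Pm_def dest: injD)
    finally show ?thesis by simp
  next
    case False
    then show ?thesis by (auto simp: Pm_def intro!: sum.neutral)
  qed
qed

lemma opnorm_Am: "opnorm (Am r c n) \<le> real n"
proof (rule opnorm_le)
  fix x assume x: "fin_supp_vec x" "vnorm2 x \<le> 1"
  define J where "J = r ` {..<n}"
  define K where "K = c ` {..<n}"
  define X where "X = {l. x l \<noteq> 0}"
  have fX: "finite X" using x unfolding fin_supp_vec_def X_def by simp
  define s where "s = (\<Sum>l\<in>X \<inter> K. x l)"
  have ma: "mat_apply (Am r c n) x j = (if j \<in> J then s else 0)" for j
  proof -
    have "mat_apply (Am r c n) x j = (\<Sum>l\<in>X. (if j \<in> J \<and> l \<in> K then 1 else 0) * x l)"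
      unfolding mat_apply_def Am_def X_def J_def K_def by simp
    also have "\<dots> = (if j \<in> J then (\<Sum>l\<in>X. if l \<in> K then x l else 0) else 0)"
      by (auto intro: sum.cong)
    also have "\<dots> = (if j \<in> J then s else 0)"
      unfolding s_def using sum.inter_restrict[OF fX, of x K] by simp
    finally show ?thesis .
  qed
  have fJ: "finite J" and cJ: "card J \<le> n" unfolding J_def by (auto intro: card_image_le[THEN order_trans])
  have fK: "finite K" and cK: "card K \<le> n" unfolding K_def by (auto intro: card_image_le[THEN order_trans])
  have "cmod s \<le> (\<Sum>l\<in>X \<inter> K. cmod (x l))" unfolding s_def by (rule norm_sum)
  also have "\<dots> = (\<Sum>l\<in>X \<inter> K. \<bar>cmod (x l)\<bar> * \<bar>1\<bar>)" by simp
  also have "\<dots> \<le> L2_set (\<lambda>l. cmod (x l)) (X \<inter> K) * L2_set (\<lambda>l. 1) (X \<inter> K)"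
    by (rule L2_set_mult_ineq)
  also have "\<dots> \<le> 1 * sqrt (real n)"
  proof (rule mult_mono)
    have "(\<Sum>l\<in>X \<inter> K. (cmod (x l))\<^sup>2) \<le> (\<Sum>l\<in>X. (cmod (x l))\<^sup>2)"
      by (rule sum_mono2) (use fX in auto)
    also have "\<dots> = vnorm2 x" unfolding vnorm2_def X_def by simp
    finally show "L2_set (\<lambda>l. cmod (x l)) (X \<inter> K) \<le> 1"
      unfolding L2_set_def using x(2) by simp
    have "card (X \<inter> K) \<le> n" using cK fK by (meson card_mono inf_le2 order_trans)
    then show "L2_set (\<lambda>l. 1) (X \<inter> K) \<le> sqrt (real n)"
      unfolding L2_set_def by simp
  qed (auto simp: L2_set_def)
  finally have sb: "cmod s \<le> sqrt (real n)" by simp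
  have supp: "{j. mat_apply (Am r c n) x j \<noteq> 0} \<subseteq> J" using ma by auto
  have "vnorm2 (mat_apply (Am r c n) x) = (\<Sum>j\<in>J. (cmod (mat_apply (Am r c n) x j))\<^sup>2)"
    by (rule vnorm2_superset[OF fJ supp])
  also have "\<dots> = real (card J) * (cmod s)\<^sup>2" using ma by simp
  also have "\<dots> \<le> real n * real n"
  proof (rule mult_mono)
    have "(cmod s)\<^sup>2 \<le> (sqrt (real n))\<^sup>2" by (rule power_mono[OF sb]) simp
    then show "(cmod s)\<^sup>2 \<le> real n" by simp
  qed (use cJ in auto)
  finally have "vnorm2 (mat_apply (Am r c n) x) \<le> (real n)\<^sup>2" by (simp add: power2_eq_square)
  then show "sqrt (vnorm2 (mat_apply (Am r c n) x)) \<le> real n"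
    using real_sqrt_le_mono by fastforce
qed

lemma schatten_Am:
  assumes "0 < p" shows "schatten_norm p (Am r c n) \<le> real n"
proof -
  have z: "sing_num k (Am r c n) = 0" if "k \<notin> {0}" for k
    by (rule sing_num_zero[OF fin_supp_Am rank_le_mono[OF rank_Am]]) (use that in auto)
  have "(\<Sum>k. sing_num k (Am r c n) powr p) = (\<Sum>k\<in>{0}. sing_num k (Am r c n) powr p)"
    by (rule suminf_finite) (use z in auto)
  then have "schatten_norm p (Am r c n) = (sing_num 0 (Am r c n) powr p) powr (1/p)"
    unfolding schatten_norm_def by simp
  also have "\<dots> = sing_num 0 (Am r c n)"
    using assms sing_num_nonneg[OF fin_supp_Am, of 0 r c n] by (simp add: powr_powr)
  also have "\<dots> \<le> opnorm (\<lambda>j l. Am r c n j l - 0)"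
    by (rule sing_num_le[OF fin_supp_Am fin_supp_zero rank_le_zero])
  also have "\<dots> \<le> real n" using opnorm_Am by simp
  finally show ?thesis .
qed



lemma mat_apply_Pm:
  assumes "inj c" "finite {l. x l \<noteq> 0}" "{l. x l \<noteq> 0} \<subseteq> c ` {..<n}"
  shows "mat_apply (Pm r c n) x j = (\<Sum>i<n. if j = r i then x (c i) else 0)"
proof -
  have "mat_apply (Pm r c n) x j = (\<Sum>l\<in>c ` {..<n}. Pm r c n j l * x l)"
    by (rule mat_apply_superset) (use assms in auto)
  also have "\<dots> = (\<Sum>i<n. Pm r c n j (c i) * x (c i))"
    by (subst sum.reindex) (use assms(1) in \<open>auto intro: inj_on_subset\<close>)
  also have "\<dots> = (\<Sum>i<n. if j = r i then x (c i) else 0)"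
    by (rule sum.cong) (use assms(1) in \<open>auto simp: Pm_def dest: injD\<close>)
  finally show ?thesis .
qed

lemma vnorm2_Pm:
  assumes "inj r" "inj c" "finite {l. x l \<noteq> 0}" "{l. x l \<noteq> 0} \<subseteq> c ` {..<n}"
  shows "vnorm2 (mat_apply (Pm r c n) x) = vnorm2 x"
proof -
  let ?z = "mat_apply (Pm r c n) x"
  have z: "?z j = (\<Sum>i<n. if j = r i then x (c i) else 0)" for j
    by (rule mat_apply_Pm[OF assms(2-4)])
  have zr: "?z (r i') = x (c i')" if "i' < n" for i'
  proof -
    have "?z (r i') = (\<Sum>i<n. if i = i' then x (c i') else 0)"
      unfolding z by (rule sum.cong) (use assms(1) in \<open>auto dest: injD\<close>)
    then show ?thesis using that by simp
  qed
  have supp: "{j. ?z j \<noteq> 0} \<subseteq> r ` {..<n}"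
  proof
    fix j assume "j \<in> {j. ?z j \<noteq> 0}"
    then have "?z j \<noteq> 0" by simp
    moreover have "?z j = 0" if "j \<notin> r ` {..<n}" unfolding z using that by (auto intro!: sum.neutral)
    ultimately show "j \<in> r ` {..<n}" by blast
  qed
  have "vnorm2 ?z = (\<Sum>j\<in>r ` {..<n}. (cmod (?z j))\<^sup>2)"
    by (rule vnorm2_superset[OF _ supp]) simp
  also have "\<dots> = (\<Sum>i<n. (cmod (?z (r i)))\<^sup>2)"
    by (subst sum.reindex) (use assms(1) in \<open>auto intro: inj_on_subset\<close>)
  also have "\<dots> = (\<Sum>i<n. (cmod (x (c i)))\<^sup>2)"
    by (rule sum.cong) (auto simp: zr)
  also have "\<dots> = (\<Sum>l\<in>c ` {..<n}. (cmod (x l))\<^sup>2)"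
    by (subst sum.reindex) (use assms(2) in \<open>auto intro: inj_on_subset\<close>)
  also have "\<dots> = vnorm2 x"
    by (rule vnorm2_superset[symmetric]) (use assms in auto)
  finally show ?thesis .
qed

lemma sing_num_Pm:
  assumes "inj r" "inj c" "k < n"
  shows "1 \<le> sing_num k (Pm r c n)"
proof (rule sing_num_ge)
  fix R assume R: "fin_supp_mat R" "rank_le R k"
  obtain u v where uv: "\<forall>j l. R j l = (\<Sum>i<k. u i j * v i l)" using R(2) unfolding rank_le_def by blast
  define K where "K = c ` {..<n}"
  have fK: "finite K" unfolding K_def by simp
  have cK: "card K = n" unfolding K_def using assms(2) by (simp add: card_image inj_on_subset)
  obtain y where y: "\<forall>l. l \<notin> K \<longrightarrow> y l = 0" "\<exists>l\<in>K. y l \<noteq> 0" "\<forall>i<k. (\<Sum>l\<in>K. v i l * y l) = 0"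
    using exists_kernel[OF fK, of k v] cK assms(3) by auto
  have suppy: "{l. y l \<noteq> 0} \<subseteq> K" using y(1) by blast
  define t where "t = vnorm2 y"
  have t: "t = (\<Sum>l\<in>K. (cmod (y l))\<^sup>2)" unfolding t_def by (rule vnorm2_superset[OF fK suppy])
  obtain l0 where l0: "l0 \<in> K" "y l0 \<noteq> 0" using y(2) by blast
  have "0 < (cmod (y l0))\<^sup>2" using l0 by simp
  also have "\<dots> \<le> t" unfolding t by (rule member_le_sum) (use fK l0 in auto)
  finally have tpos: "0 < t" .
  define x where "x l = y l / complex_of_real (sqrt t)" for l
  have suppx: "{l. x l \<noteq> 0} \<subseteq> K" using suppy tpos unfolding x_def by auto
  have finx: "finite {l. x l \<noteq> 0}" using suppx fK finite_subset by blast
  have vx: "vnorm2 x = 1"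
  proof -
    have "vnorm2 x = (\<Sum>l\<in>K. (cmod (x l))\<^sup>2)" by (rule vnorm2_superset[OF fK suppx])
    also have "\<dots> = (\<Sum>l\<in>K. (cmod (y l))\<^sup>2 / t)"
      by (rule sum.cong) (use tpos in \<open>auto simp: x_def norm_divide power_divide\<close>)
    also have "\<dots> = 1" using tpos unfolding t by (simp add: sum_divide_distrib[symmetric])
    finally show ?thesis .
  qed
  have Rx: "mat_apply R x j = 0" for j
  proof -
    have "mat_apply R x j = (\<Sum>l\<in>K. R j l * x l)" by (rule mat_apply_superset[OF fK suppx])
    also have "\<dots> = (\<Sum>l\<in>K. \<Sum>i<k. u i j * (v i l * y l) / complex_of_real (sqrt t))"
      using uv by (simp add: x_def sum_distrib_right sum_distrib_left sum_divide_distrib algebra_simps)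
    also have "\<dots> = (\<Sum>i<k. u i j * (\<Sum>l\<in>K. v i l * y l) / complex_of_real (sqrt t))"
      by (subst sum.swap) (simp add: sum_distrib_left sum_divide_distrib)
    also have "\<dots> = 0" using y(3) by simp
    finally show ?thesis .
  qed
  have "mat_apply (\<lambda>j l. Pm r c n j l - R j l) x = mat_apply (Pm r c n) x"
  proof
    fix j
    have "mat_apply (\<lambda>j l. Pm r c n j l - R j l) x j = mat_apply (Pm r c n) x j - mat_apply R x j"
      unfolding mat_apply_def by (simp add: algebra_simps sum_subtractf)
    then show "mat_apply (\<lambda>j l. Pm r c n j l - R j l) x j = mat_apply (Pm r c n) x j" using Rx by simp
  qed
  then have "sqrt (vnorm2 (mat_apply (\<lambda>j l. Pm r c n j l - R j l) x)) = 1"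
    using vnorm2_Pm[OF assms(1,2) finx] suppx vx unfolding K_def by simp
  moreover have "sqrt (vnorm2 (mat_apply (\<lambda>j l. Pm r c n j l - R j l) x)) \<le> opnorm (\<lambda>j l. Pm r c n j l - R j l)"
    by (rule opnorm_in[OF fin_supp_diff[OF fin_supp_Pm R(1)]]) (use finx vx in \<open>auto simp: fin_supp_vec_def\<close>)
  ultimately show "1 \<le> opnorm (\<lambda>j l. Pm r c n j l - R j l)" by simp
qed

lemma schatten_Pm:
  assumes "inj r" "inj c" "0 < p"
  shows "real n powr (1/p) \<le> schatten_norm p (Pm r c n)"
proof -
  have z: "sing_num k (Pm r c n) = 0" if "k \<notin> {..<n}" for k
    by (rule sing_num_zero[OF fin_supp_Pm rank_le_mono[OF rank_Pm[OF assms(1)]]]) (use that in auto)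
  have "(\<Sum>k. sing_num k (Pm r c n) powr p) = (\<Sum>k\<in>{..<n}. sing_num k (Pm r c n) powr p)"
    by (rule suminf_finite) (use z in auto)
  then have e: "schatten_norm p (Pm r c n) = (\<Sum>k<n. sing_num k (Pm r c n) powr p) powr (1/p)"
    unfolding schatten_norm_def by simp
  have "real n = (\<Sum>k<n. 1)" by simp
  also have "\<dots> \<le> (\<Sum>k<n. sing_num k (Pm r c n) powr p)"
  proof (rule sum_mono)
    fix k assume "k \<in> {..<n}"
    then have "1 \<le> sing_num k (Pm r c n)" using sing_num_Pm[OF assms(1,2)] by simp
    then have "1 powr p \<le> sing_num k (Pm r c n) powr p" using assms(3) by (intro powr_mono2) auto
    then show "1 \<le> sing_num k (Pm r c n) powr p" by simp
  qed
  finally have "real n powr (1/p) \<le> (\<Sum>k<n. sing_num k (Pm r c n) powr p) powr (1/p)"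
    using assms(3) by (intro powr_mono2) auto
  then show ?thesis using e by simp
qed



lemma main_contra:
  fixes r c :: "nat \<Rightarrow> nat"
  assumes "inj r" "inj c" "\<And>i. (r i, c i) \<in> S" "0 < p" "p < 1" "schur_bounded_pattern p S"
  shows False
proof -
  define m :: cmatrix where "m = (\<lambda>j k. if \<exists>i. j = r i \<and> k = c i then 1 else 0)"
  have "bounded_fun m" unfolding bounded_fun_def m_def by (rule exI[of _ 1]) auto
  moreover have "\<forall>j k. (j, k) \<notin> S \<longrightarrow> m j k = 0" using assms(3) unfolding m_def by auto
  ultimately have "bounded_schur_multiplier p m" using assms(6) unfolding schur_bounded_pattern_def by blast
  then obtain C where C: "\<And>A. fin_supp_mat A \<Longrightarrow> schatten_norm p (schur_mult m A) \<le> C * schatten_norm p A"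
    unfolding bounded_schur_multiplier_def by blast
  have sm: "schur_mult m (Am r c n) = Pm r c n" for n
    unfolding schur_mult_def m_def Am_def Pm_def using assms(1,2)
    by (intro ext) (auto dest: injD)
  have key: "real n powr (1/p) \<le> \<bar>C\<bar> * real n" for n
  proof -
    have "real n powr (1/p) \<le> schatten_norm p (Pm r c n)" by (rule schatten_Pm[OF assms(1,2,4)])
    also have "\<dots> \<le> C * schatten_norm p (Am r c n)" using C[OF fin_supp_Am, of r c n] sm by simp
    also have "\<dots> \<le> \<bar>C\<bar> * real n"
    proof -
      have "0 \<le> schatten_norm p (Am r c n)" unfolding schatten_norm_def by simp
      then have "C * schatten_norm p (Am r c n) \<le> \<bar>C\<bar> * schatten_norm p (Am r c n)"
        by (simp add: mult_right_mono)
      also have "\<dots> \<le> \<bar>C\<bar> * real n" by (rule mult_left_mono[OF schatten_Am[OF assms(4)]]) simp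
      finally show ?thesis .
    qed
    finally show ?thesis .
  qed
  define q where "q = 1/p - 1"
  have qpos: "0 < q" using assms(4,5) unfolding q_def by (simp add: field_simps)
  define N :: nat where "N = nat \<lceil>(\<bar>C\<bar> + 1) powr (1/q)\<rceil> + 1"
  have "1 \<le> N" unfolding N_def by simp
  then have N1: "1 \<le> real N" by simp
  have NC: "(\<bar>C\<bar> + 1) powr (1/q) \<le> real N" unfolding N_def using real_nat_ceiling_ge[of "(\<bar>C\<bar> + 1) powr (1/q)"] by (simp only: of_nat_add)
  have "\<bar>C\<bar> + 1 = ((\<bar>C\<bar> + 1) powr (1/q)) powr q" using qpos by (simp add: powr_powr)
  also have "\<dots> \<le> real N powr q" using qpos NC by (intro powr_mono2) auto
  finally have h: "\<bar>C\<bar> + 1 \<le> real N powr q" .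
  have "real N powr (1/p) = real N powr (1 + q)" unfolding q_def by simp
  also have "\<dots> = real N * real N powr q" using N1 by (simp add: powr_add)
  finally have "real N * real N powr q \<le> \<bar>C\<bar> * real N" using key[of N] by simp
  moreover have "real N * (\<bar>C\<bar> + 1) \<le> real N * real N powr q" using h N1 by simp
  ultimately show False using N1 h by (simp add: algebra_simps)
qed

primrec Fseq :: "(nat set \<Rightarrow> nat \<times> nat) \<Rightarrow> nat \<Rightarrow> nat set" where
  "Fseq g 0 = {}"
| "Fseq g (Suc n) = Fseq g n \<union> {fst (g (Fseq g n)), snd (g (Fseq g n))}"

lemma Fseq_finite: "finite (Fseq g n)" by (induction n) auto

lemma Fseq_mono: "i \<le> n \<Longrightarrow> Fseq g i \<subseteq> Fseq g n"
  by (induction n) (auto simp: le_Suc_eq)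

lemma Fseq_mem:
  assumes "i < n"
  shows "fst (g (Fseq g i)) \<in> Fseq g n \<and> snd (g (Fseq g i)) \<in> Fseq g n"
  using Fseq_mono[of "Suc i" n g] assms by auto

theorem mainTheorem3:
  fixes p :: real and S :: "(nat \<times> nat) set"
  assumes "0 < p" and "p < 1"
    and "schur_bounded_pattern p S"
  shows "\<exists>F :: nat set. finite F \<and> S \<subseteq> (F \<times> UNIV) \<union> (UNIV \<times> F)"
proof (rule ccontr)
  assume na: "\<not> ?thesis"
  have "\<forall>F. \<exists>z. finite F \<longrightarrow> z \<in> S \<and> fst z \<notin> F \<and> snd z \<notin> F"
  proof
    fix F
    show "\<exists>z. finite F \<longrightarrow> z \<in> S \<and> fst z \<notin> F \<and> snd z \<notin> F"
    proof (cases "finite F")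
      case True
      then have "\<not> S \<subseteq> (F \<times> UNIV) \<union> (UNIV \<times> F)" using na by blast
      then show ?thesis by auto
    qed simp
  qed
  then obtain g where g: "\<And>F. finite F \<Longrightarrow> g F \<in> S \<and> fst (g F) \<notin> F \<and> snd (g F) \<notin> F"
    by metis
  define r where "r i = fst (g (Fseq g i))" for i
  define c where "c i = snd (g (Fseq g i))" for i
  have rn: "r n \<notin> Fseq g n" "c n \<notin> Fseq g n" for n
    using g[OF Fseq_finite[of g n]] unfolding r_def c_def by auto
  have ri: "r i \<in> Fseq g n" "c i \<in> Fseq g n" if "i < n" for i n
    using Fseq_mem[OF that, of g] unfolding r_def c_def by auto
  have "inj r"
    by (rule linorder_injI) (metis rn(1) ri(1))
  moreover have "inj c"
    by (rule linorder_injI) (metis rn(2) ri(2))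
  moreover have "(r i, c i) \<in> S" for i
    using g[OF Fseq_finite[of g i]] unfolding r_def c_def by auto
  ultimately show False using main_contra assms by blast
qed


end
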